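(* Let $\Gamma$ be a web and $G=SU(3)$. The set of homomorphisms $\rho:\pi_1(S^3-\Gamma)\to SU(3)$ such that every meridian is sent to a matrix of trace $-1$ is in one-to-one correspondence with the set of assignments of complex lines in $\mathbb{C}^3$ to the edges of $\Gamma$ such that the three lines at any vertex are mutually Hermitian orthogonal.
   Context: A web is an oriented graph $\Gamma$ embedded in $S^2\subset S^3$ each of whose vertices is trivalent and is a source or a sink. With basepoint above the plane, each edge $e_i$ has a meridian $x_i$ (a loop encircling $e_i$ once by the right hand rule), and $\pi_1(S^3-\Gamma)=\langle x_i\mid x_{a}x_{b}x_{c}=e\ \text{for each vertex with incident edges } e_a,e_b,e_c\rangle$. The correspondence sends $\rho$ to the assignment of the $+1$-eigenspace of $\rho(x_i)$ to $e_i$. *)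

theory Defs
  imports "HOL-Analysis.Analysis" "HOL-Library.FuncSet"
begin

type_synonym cmat3 = "complex ^3 ^3"
type_synonym cvec3 = "complex ^3"

definition mtrace :: "cmat3 \<Rightarrow> complex" where
  "mtrace A = (\<Sum>i\<in>UNIV. A $ i $ i)"

definition cadjoint :: "cmat3 \<Rightarrow> cmat3" where
  "cadjoint A = (\<chi> i j. cnj (A $ j $ i))"

definition SU3 :: "cmat3 set" where
  "SU3 = {A. A ** cadjoint A = mat 1 \<and> det A = 1}"

definition hinner :: "cvec3 \<Rightarrow> cvec3 \<Rightarrow> complex" where
  "hinner u v = (\<Sum>i\<in>UNIV. u $ i * cnj (v $ i))"

definition complex_line :: "cvec3 set \<Rightarrow> bool" where
  "complex_line L \<longleftrightarrow> (\<exists>v. v \<noteq> 0 \<and> L = {c *s v | c. True})"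

definition herm_orth :: "cvec3 set \<Rightarrow> cvec3 set \<Rightarrow> bool" where
  "herm_orth L M \<longleftrightarrow> (\<forall>u\<in>L. \<forall>v\<in>M. hinner u v = 0)"

definition eigenspace1 :: "cmat3 \<Rightarrow> cvec3 set" where
  "eigenspace1 A = {v. A *v v = v}"

text \<open>Combinatorial data of a web: edge set E, vertex set V, tail/head maps,
  and for each vertex the ordered triple (a,b,c) of incident edges in the order
  (given by the planar embedding) used in the Wirtinger-type relation x_a x_b x_c = e.\<close>
definition web :: "'e set \<Rightarrow> 'v set \<Rightarrow> ('e \<Rightarrow> 'v) \<Rightarrow> ('e \<Rightarrow> 'v) \<Rightarrow> ('v \<Rightarrow> 'e \<times> 'e \<times> 'e) \<Rightarrow> bool" where
  "web E V src tgt tri \<longleftrightarrow> finite E \<and> finite V \<and>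
     (\<forall>e\<in>E. src e \<in> V \<and> tgt e \<in> V \<and> src e \<noteq> tgt e) \<and>
     (\<forall>v\<in>V. case tri v of (a, b, c) \<Rightarrow>
        a \<noteq> b \<and> b \<noteq> c \<and> a \<noteq> c \<and>
        {e\<in>E. src e = v \<or> tgt e = v} = {a, b, c} \<and>
        ((src a = v \<and> src b = v \<and> src c = v) \<or> (tgt a = v \<and> tgt b = v \<and> tgt c = v)))"

text \<open>Homomorphisms pi_1(S^3 - Gamma) -> SU(3) with every meridian of trace -1,
  identified (via the presentation) with their values on the meridian generators.\<close>
definition trace_minus_one_reps ::
  "'e set \<Rightarrow> 'v set \<Rightarrow> ('v \<Rightarrow> 'e \<times> 'e \<times> 'e) \<Rightarrow> ('e \<Rightarrow> cmat3) set" where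
  "trace_minus_one_reps E V tri =
     {r \<in> E \<rightarrow>\<^sub>E SU3. (\<forall>e\<in>E. mtrace (r e) = -1) \<and>
        (\<forall>v\<in>V. case tri v of (a, b, c) \<Rightarrow> r a ** r b ** r c = mat 1)}"

definition orth_line_assignments ::
  "'e set \<Rightarrow> 'v set \<Rightarrow> ('v \<Rightarrow> 'e \<times> 'e \<times> 'e) \<Rightarrow> ('e \<Rightarrow> cvec3 set) set" where
  "orth_line_assignments E V tri =
     {L \<in> E \<rightarrow>\<^sub>E Collect complex_line.
        \<forall>v\<in>V. case tri v of (a, b, c) \<Rightarrow>
          herm_orth (L a) (L b) \<and> herm_orth (L b) (L c) \<and> herm_orth (L a) (L c)}"

end

theory Submission
  imports Defs
begin


lemma mm3: "((A::'a::comm_ring_1^3^3) ** B)$i$j = A$i$1*B$1$j + A$i$2*B$2$j + A$i$3*B$3$j"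
  by (simp add: matrix_matrix_mult_def sum_3)

definition adj3 :: "cmat3 \<Rightarrow> cmat3" where
 "adj3 A = (\<chi> i j. if i=1\<and>j=1 then A$2$2*A$3$3 - A$2$3*A$3$2
   else if i=1\<and>j=2 then A$1$3*A$3$2 - A$1$2*A$3$3
   else if i=1\<and>j=3 then A$1$2*A$2$3 - A$1$3*A$2$2
   else if i=2\<and>j=1 then A$2$3*A$3$1 - A$2$1*A$3$3
   else if i=2\<and>j=2 then A$1$1*A$3$3 - A$1$3*A$3$1
   else if i=2\<and>j=3 then A$1$3*A$2$1 - A$1$1*A$2$3
   else if i=3\<and>j=1 then A$2$1*A$3$2 - A$2$2*A$3$1
   else if i=3\<and>j=2 then A$1$2*A$3$1 - A$1$1*A$3$2
   else A$1$1*A$2$2 - A$1$2*A$2$1)"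

lemma adj3_mult: "adj3 A ** A = (\<chi> i j. if i = j then det A else 0)"
  unfolding vec_eq_iff forall_3 mm3 det_3
  by (simp add: adj3_def algebra_simps)

lemma su3_adj: assumes "A \<in> SU3" shows "adj3 A = cadjoint A"
proof -
  have u: "A ** cadjoint A = mat 1" and d: "det A = 1" using assms by (auto simp: SU3_def)
  have "adj3 A ** A = mat 1" using adj3_mult[of A] d by (simp add: mat_def vec_eq_iff)
  hence "adj3 A = (adj3 A ** A) ** cadjoint A" using u
    by (metis matrix_mul_assoc matrix_mul_rid)
  thus ?thesis using \<open>adj3 A ** A = mat 1\<close> by (simp add: matrix_mul_lid)
qed

lemma su3_det_minus: assumes "A \<in> SU3" "mtrace A = -1" shows "det (A - mat 1) = 0"
proof -
  have e: "adj3 A $ i $ i = cnj (A $ i $ i)" for i using su3_adj[OF assms(1)] by (simp add: cadjoint_def)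
  have d: "det A = 1" using assms by (auto simp: SU3_def)
  have t: "A$1$1 + A$2$2 + A$3$3 = -1" using assms(2) by (simp add: mtrace_def sum_3)
  hence t': "cnj (A$1$1) + cnj (A$2$2) + cnj (A$3$3) = -1"
    by (metis complex_cnj_add complex_cnj_minus complex_cnj_one)
  have "adj3 A $1$1 + adj3 A $2$2 + adj3 A $3$3 = -1" using e t' by simp
  hence c: "A$2$2*A$3$3 - A$2$3*A$3$2 + (A$1$1*A$3$3 - A$1$3*A$3$1) + (A$1$1*A$2$2 - A$1$2*A$2$1) = -1"
    by (simp add: adj3_def)
  show ?thesis using c t d unfolding det_3
    by (simp add: mat_def algebra_simps)
qed


definition refl3 :: "cvec3 \<Rightarrow> cmat3" where
  "refl3 u = (\<chi> i j. 2 * u$i * cnj (u$j) - (if i = j then 1 else 0))"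

lemma refl3_nth: "refl3 u $ i $ j = 2 * u$i * cnj (u$j) - (if i = j then 1 else 0)"
  by (simp add: refl3_def)

lemma hinner3: "hinner u w = u$1 * cnj (w$1) + u$2 * cnj (w$2) + u$3 * cnj (w$3)"
  by (simp add: hinner_def sum_3)

lemma refl3_mult: "refl3 u ** refl3 w = (\<chi> i j. 4 * hinner w u * u$i * cnj (w$j)
   - 2 * u$i * cnj (u$j) - 2 * w$i * cnj (w$j) + (if i = j then 1 else 0))"
  unfolding vec_eq_iff forall_3 mm3 refl3_nth hinner3
  by (simp add: algebra_simps)

lemma refl3_sq: assumes "hinner u u = 1" shows "refl3 u ** refl3 u = mat 1"
  using assms unfolding refl3_mult by (simp add: vec_eq_iff mat_def)

lemma refl3_adj: "cadjoint (refl3 u) = refl3 u"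
  by (simp add: vec_eq_iff cadjoint_def refl3_nth)

lemma refl3_det: "det (refl3 u) = 2 * hinner u u - 1"
  unfolding det_3 refl3_nth hinner3 by (simp add: algebra_simps)

lemma refl3_trace: "mtrace (refl3 u) = 2 * hinner u u - 3"
  unfolding mtrace_def sum_3 refl3_nth hinner3 by (simp add: algebra_simps)

lemma refl3_SU3: assumes "hinner u u = 1" shows "refl3 u \<in> SU3" "mtrace (refl3 u) = -1"
  using assms refl3_sq[OF assms] by (auto simp: SU3_def refl3_adj refl3_det refl3_trace)

lemma hinner_cnj: "cnj (hinner u w) = hinner w u"
  by (simp add: hinner3 algebra_simps)

lemma trace_refl3_mult: assumes "hinner u u = 1" "hinner w w = 1"
  shows "mtrace (refl3 u ** refl3 w) = 4 * hinner w u * cnj (hinner w u) - 1"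
proof -
  have "mtrace (refl3 u ** refl3 w) = 4 * hinner w u * hinner u w - 2 * hinner u u - 2 * hinner w w + 3"
    unfolding refl3_mult mtrace_def sum_3 hinner3 by (simp add: algebra_simps)
  thus ?thesis using assms hinner_cnj[of w u] by simp
qed

lemma refl3_mulvec: "(refl3 u *v x) $ i = 2 * hinner x u * u$i - x$i"
  unfolding matrix_vector_mult_def hinner3 refl3_nth
  using exhaust_3[of i] by (auto simp: sum_3 algebra_simps)

lemma hinner_scale: "hinner (c *s u) (d *s w) = c * cnj d * hinner u w"
  by (simp add: hinner3 algebra_simps)

lemma eig_refl3: assumes "hinner u u = 1" shows "eigenspace1 (refl3 u) = {c *s u | c. True}"
proof (intro set_eqI iffI)
  fix x assume "x \<in> eigenspace1 (refl3 u)"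
  hence "refl3 u *v x = x" by (simp add: eigenspace1_def)
  hence "\<And>i. 2 * hinner x u * u$i - x$i = x$i" by (metis refl3_mulvec)
  hence "x = hinner x u *s u" by (simp add: vec_eq_iff)
  thus "x \<in> {c *s u | c. True}" by blast
next
  fix x assume "x \<in> {c *s u | c. True}"
  then obtain c where x: "x = c *s u" by blast
  have "hinner x u = c" using hinner_scale[of c u 1 u] assms by (simp add: x)
  hence "refl3 u *v x = x" by (simp add: vec_eq_iff refl3_mulvec x)
  thus "x \<in> eigenspace1 (refl3 u)" by (simp add: eigenspace1_def)
qed



lemma cnj_self_real: "z * cnj z = complex_of_real ((cmod z)^2)"
  by (metis complex_norm_square)

lemma fro_zero:
  fixes N :: cmat3
  assumes "(\<Sum>i\<in>UNIV. \<Sum>k\<in>UNIV. N$i$k * cnj (N$i$k)) = 0"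
  shows "N = 0"
proof -
  have "complex_of_real (\<Sum>i\<in>UNIV. \<Sum>k\<in>UNIV. (cmod (N$i$k))^2) = 0"
    using assms by (simp add: cnj_self_real)
  hence s: "(\<Sum>i\<in>UNIV. \<Sum>k\<in>UNIV. (cmod (N$i$k))^2) = 0" by (simp only: of_real_eq_0_iff)
  have "\<forall>i\<in>UNIV. (\<Sum>k\<in>UNIV. (cmod (N$i$k))^2) = 0"
    using s by (subst (asm) sum_nonneg_eq_0_iff) (auto intro: sum_nonneg)
  hence "\<forall>i k. (cmod (N$i$k))^2 = 0"
    by (subst (asm) sum_nonneg_eq_0_iff) auto
  thus ?thesis by (simp add: vec_eq_iff)
qed

lemma hinner_self_pos: assumes "v \<noteq> 0" shows "hinner v v = complex_of_real (\<Sum>i\<in>UNIV. (cmod (v$i))^2)"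
  and "(\<Sum>i\<in>UNIV. (cmod (v$i))^2) > 0"
proof -
  show "hinner v v = complex_of_real (\<Sum>i\<in>UNIV. (cmod (v$i))^2)"
    by (simp add: hinner_def cnj_self_real)
  obtain j where "v$j \<noteq> 0" using assms by (auto simp: vec_eq_iff)
  hence "(cmod (v$j))^2 > 0" by simp
  moreover have "(cmod (v$j))^2 \<le> (\<Sum>i\<in>UNIV. (cmod (v$i))^2)"
    by (rule member_le_sum) auto
  ultimately show "(\<Sum>i\<in>UNIV. (cmod (v$i))^2) > 0" by linarith
qed

lemma normalize: assumes "v \<noteq> 0"
  obtains t u where "t \<noteq> 0" "u = t *s v" "hinner u u = 1"
proof -
  define n where "n = (\<Sum>i\<in>UNIV. (cmod (v$i))^2)"
  have n: "n > 0" "hinner v v = complex_of_real n" using hinner_self_pos[OF assms] by (auto simp: n_def)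
  define t where "t = complex_of_real (1 / sqrt n)"
  have t0: "t \<noteq> 0" using n by (simp add: t_def)
  have "hinner (t *s v) (t *s v) = t * cnj t * complex_of_real n" by (simp add: hinner_scale n)
  also have "\<dots> = complex_of_real ((1 / sqrt n) * (1 / sqrt n) * n)" by (simp only: t_def complex_cnj_complex_of_real of_real_mult)
  also have "\<dots> = 1"
  proof -
    have "sqrt n * sqrt n = n" using n by simp
    hence "(1 / sqrt n) * (1 / sqrt n) * n = 1" using n by (simp add: field_simps)
    thus ?thesis by simp
  qed
  finally show ?thesis using that t0 by blast
qed

lemma line_unit: assumes "complex_line L"
  obtains u where "hinner u u = 1" "L = {c *s u | c. True}"
proof -
  obtain v where v: "v \<noteq> 0" "L = {c *s v | c. True}" using assms by (auto simp: complex_line_def)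
  obtain t u where tu: "t \<noteq> 0" "u = t *s v" "hinner u u = 1" using normalize[OF v(1)] by blast
  have "{c *s u | c. True} = {c *s v | c. True}"
  proof (intro set_eqI iffI)
    fix x assume "x \<in> {c *s u | c. True}"
    then obtain c where "x = c *s u" by blast
    hence "x = (c * t) *s v" by (simp add: tu vector_smult_assoc)
    thus "x \<in> {c *s v | c. True}" by blast
  next
    fix x assume "x \<in> {c *s v | c. True}"
    then obtain c where "x = c *s v" by blast
    hence "x = (c / t) *s u" using tu by (simp add: vector_smult_assoc)
    thus "x \<in> {c *s u | c. True}" by blast
  qed
  thus ?thesis using that tu v by blast
qed

lemma unit_line: assumes "hinner u u = 1" shows "complex_line {c *s u | c. True}"
proof -
  have "u \<noteq> 0" using assms by (auto simp: hinner_def)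
  thus ?thesis by (auto simp: complex_line_def)
qed

lemma refl3_same_line: assumes "hinner u u = 1" "hinner w w = 1"
  and "{c *s u | c. True} = {c *s w | c. True}" shows "refl3 u = refl3 w"
proof -
  have "w \<in> {c *s u | c. True}" using assms(3) by (metis (mono_tags, lifting) mem_Collect_eq vector_smult_lid)
  then obtain c where w: "w = c *s u" by blast
  have "c * cnj c = 1" using assms(2) hinner_scale[of c u c u] assms(1) by (simp add: w)
  thus ?thesis by (simp add: vec_eq_iff refl3_nth w)
qed

lemma char_trm1: assumes "A \<in> SU3" "mtrace A = -1" obtains u where "hinner u u = 1" "A = refl3 u"
proof -
  have "det (A - mat 1) = 0" by (rule su3_det_minus[OF assms])
  hence "\<not> invertible (A - mat 1)" by (simp add: invertible_det_nz)
  then obtain v where v: "v \<noteq> 0" "(A - mat 1) *v v = 0"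
    by (metis invertible_left_inverse matrix_left_invertible_ker)
  have Av: "A *v v = v" using v(2) by (simp add: matrix_vector_mult_diff_rdistrib)
  obtain t u where tu: "t \<noteq> 0" "u = t *s v" "hinner u u = 1" using normalize[OF v(1)] by blast
  have Au: "A *v u = u" using Av by (simp add: tu vector_smult_assoc matrix_vector_mult_scaleR
     vec.scale[symmetric]) (metis Av matrix_vector_mul_linear_gen vec.linear_scale)
  have uni: "A ** cadjoint A = mat 1" using assms(1) by (simp add: SU3_def)
  have au: "(\<Sum>k\<in>UNIV. A$i$k * u$k) = u$i" for i
    using Au by (simp add: vec_eq_iff matrix_vector_mult_def)
  have au': "(\<Sum>k\<in>UNIV. u$k * A$i$k) = u$i" for i using au[of i] by (simp add: mult.commute)
  have aa: "(\<Sum>k\<in>UNIV. A$i$k * cnj (A$i$k)) = 1" for i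
  proof -
    have "(A ** cadjoint A)$i$i = 1" using uni by (simp add: mat_def)
    thus ?thesis by (simp add: matrix_matrix_mult_def cadjoint_def)
  qed
  let ?R = "refl3 u"
  have S1: "(\<Sum>i\<in>UNIV. \<Sum>k\<in>UNIV. A$i$k * cnj (A$i$k)) = 3" by (simp add: aa)
  have S2: "(\<Sum>i\<in>UNIV. \<Sum>k\<in>UNIV. A$i$k * cnj (?R$i$k)) = 3"
  proof -
    have "(\<Sum>i\<in>UNIV. \<Sum>k\<in>UNIV. A$i$k * cnj (?R$i$k))
        = (\<Sum>i\<in>UNIV. \<Sum>k\<in>UNIV. 2 * cnj (u$i) * (A$i$k * u$k) - (if i = k then A$i$k else 0))"
      by (rule sum.cong[OF refl], rule sum.cong[OF refl]) (simp add: refl3_nth algebra_simps)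
    also have "\<dots> = (\<Sum>i\<in>UNIV. 2 * cnj (u$i) * (\<Sum>k\<in>UNIV. A$i$k * u$k) - A$i$i)"
      by (simp add: sum_subtractf sum_distrib_left)
    also have "\<dots> = (\<Sum>i\<in>UNIV. 2 * (u$i * cnj (u$i)) - A$i$i)"
      unfolding au by (simp add: algebra_simps)
    also have "\<dots> = 2 * hinner u u - mtrace A"
      by (simp add: sum_subtractf sum_distrib_left hinner_def mtrace_def)
    finally show ?thesis using tu assms(2) by simp
  qed
  have S3: "(\<Sum>i\<in>UNIV. \<Sum>k\<in>UNIV. ?R$i$k * cnj (A$i$k)) = 3"
  proof -
    have "cnj (\<Sum>i\<in>UNIV. \<Sum>k\<in>UNIV. A$i$k * cnj (?R$i$k)) = (\<Sum>i\<in>UNIV. \<Sum>k\<in>UNIV. ?R$i$k * cnj (A$i$k))"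
      by (simp add: cnj_sum mult.commute)
    thus ?thesis using S2 by simp
  qed
  have S4: "(\<Sum>i\<in>UNIV. \<Sum>k\<in>UNIV. ?R$i$k * cnj (?R$i$k)) = 3"
  proof -
    have "(\<Sum>i\<in>UNIV. \<Sum>k\<in>UNIV. ?R$i$k * cnj (?R$i$k)) = 4 * hinner u u * hinner u u - 4 * hinner u u + 3"
      unfolding sum_3 refl3_nth hinner3 by (simp add: algebra_simps)
    thus ?thesis using tu by simp
  qed
  have "(\<Sum>i\<in>UNIV. \<Sum>k\<in>UNIV. (A - ?R)$i$k * cnj ((A - ?R)$i$k)) =
     (\<Sum>i\<in>UNIV. \<Sum>k\<in>UNIV. A$i$k * cnj (A$i$k)) - (\<Sum>i\<in>UNIV. \<Sum>k\<in>UNIV. A$i$k * cnj (?R$i$k))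
     - (\<Sum>i\<in>UNIV. \<Sum>k\<in>UNIV. ?R$i$k * cnj (A$i$k)) + (\<Sum>i\<in>UNIV. \<Sum>k\<in>UNIV. ?R$i$k * cnj (?R$i$k))"
    by (simp add: sum_subtractf sum.distrib algebra_simps)
  also have "\<dots> = 0" using S1 S2 S3 S4 by simp
  finally have "A - ?R = 0" by (rule fro_zero)
  thus ?thesis using that tu by simp
qed



lemma triple_orth:
  assumes ua: "hinner a a = 1" and ub: "hinner b b = 1" and uc: "hinner c c = 1"
    and ab: "hinner a b = 0" and bc: "hinner b c = 0" and ac: "hinner a c = 0"
  shows "refl3 a ** refl3 b ** refl3 c = mat 1"
proof -
  have ba: "hinner b a = 0" and cb: "hinner c b = 0" and ca: "hinner c a = 0"
    using ab bc ac hinner_cnj by (metis complex_cnj_zero)+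
  define N :: cmat3 where "N = (\<chi> i k. (if i = k then 1 else 0) - a$i * cnj (a$k) - b$i * cnj (b$k) - c$i * cnj (c$k))"
  have "(\<Sum>i\<in>UNIV. \<Sum>k\<in>UNIV. N$i$k * cnj (N$i$k)) = 3 - 2 * (hinner a a + hinner b b + hinner c c)
     + hinner a a * hinner a a + hinner b b * hinner b b + hinner c c * hinner c c
     + hinner a b * hinner b a + hinner b a * hinner a b + hinner b c * hinner c b + hinner c b * hinner b c
     + hinner a c * hinner c a + hinner c a * hinner a c"
    unfolding N_def sum_3 hinner3 by (simp add: algebra_simps)
  also have "\<dots> = 0" using ua ub uc ab bc ac ba cb ca by simp
  finally have "N = 0" by (rule fro_zero)
  hence e: "a$i * cnj (a$k) + b$i * cnj (b$k) + c$i * cnj (c$k) = (if i = k then 1 else 0)" for i k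
    by (simp add: N_def vec_eq_iff algebra_simps)
  have e': "a$i * cnj (a$k) + b$i * cnj (b$k) = (if i = k then 1 else 0) - c$i * cnj (c$k)" for i k
    using e[of i k] by (simp add: eq_diff_eq)
  have "refl3 a ** refl3 b = refl3 c"
  proof -
    have "(refl3 a ** refl3 b) $ i $ k = refl3 c $ i $ k" for i k
    proof -
      have "(refl3 a ** refl3 b) $ i $ k = - 2 * (a$i * cnj (a$k) + b$i * cnj (b$k)) + (if i = k then 1 else 0)"
        unfolding refl3_mult by (simp add: ba algebra_simps)
      also have "\<dots> = - 2 * ((if i = k then 1 else 0) - c$i * cnj (c$k)) + (if i = k then 1 else 0)"
        unfolding e' ..
      also have "\<dots> = refl3 c $ i $ k" by (simp add: refl3_nth algebra_simps)
      finally show ?thesis .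
    qed
    thus ?thesis by (simp add: vec_eq_iff)
  qed
  thus ?thesis using refl3_sq[OF uc] by simp
qed

lemma zero_of_norm: "h * cnj h = 0 \<Longrightarrow> (h::complex) = 0"
  by simp

lemma pair_from_prod: assumes ua: "hinner a a = 1" and ub: "hinner b b = 1" and uc: "hinner c c = 1"
  and "refl3 a ** refl3 b = refl3 c" shows "hinner b a = 0"
proof -
  have "4 * hinner b a * cnj (hinner b a) - 1 = -1"
    using trace_refl3_mult[OF ua ub] assms(4) refl3_SU3(2)[OF uc] by simp
  hence "hinner b a * cnj (hinner b a) = 0" by simp
  thus ?thesis by simp
qed

lemma vertex_orth:
  assumes ua: "hinner a a = 1" and ub: "hinner b b = 1" and uc: "hinner c c = 1"
    and p: "refl3 a ** refl3 b ** refl3 c = mat 1"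
  shows "hinner b a = 0" "hinner c b = 0" "hinner a c = 0"
proof -
  let ?A = "refl3 a" and ?B = "refl3 b" and ?C = "refl3 c"
  have AA: "?A ** ?A = mat 1" "?B ** ?B = mat 1" "?C ** ?C = mat 1" using refl3_sq ua ub uc by auto
  have "?A ** ?B = ?A ** ?B ** (?C ** ?C)" using AA by (simp add: matrix_mul_rid)
  also have "\<dots> = (?A ** ?B ** ?C) ** ?C" by (simp add: matrix_mul_assoc)
  also have "\<dots> = ?C" by (simp only: p matrix_mul_lid)
  finally have 1: "?A ** ?B = ?C" .
  have "?B ** ?C = ?A ** ?A ** (?B ** ?C)" using AA by (simp add: matrix_mul_lid)
  also have "\<dots> = ?A ** (?A ** ?B ** ?C)" by (simp add: matrix_mul_assoc)
  also have "\<dots> = ?A" by (simp only: p matrix_mul_rid)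
  finally have 2: "?B ** ?C = ?A" .
  have "?C ** ?A = ?B ** ?B ** (?C ** ?A)" using AA by (simp add: matrix_mul_lid)
  also have "\<dots> = ?B ** ((?B ** ?C) ** ?A)" by (simp add: matrix_mul_assoc)
  also have "\<dots> = ?B ** (?A ** ?A)" by (simp only: 2)
  also have "\<dots> = ?B" using AA by (simp add: matrix_mul_rid)
  finally have 3: "?C ** ?A = ?B" .
  show "hinner b a = 0" using pair_from_prod[OF ua ub uc 1] .
  show "hinner c b = 0" using pair_from_prod[OF ub uc ua 2] .
  show "hinner a c = 0" using pair_from_prod[OF uc ua ub 3] .
qed



lemma line_mem: "(u::cvec3) \<in> {c *s u | c. True}"
proof -
  have "u = 1 *s u" by simp
  thus ?thesis by blast
qed

lemma herm_orth_lines: assumes "hinner w u = 0"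
  shows "herm_orth {c *s u | c. True} {c *s w | c. True}"
proof -
  have "hinner u w = 0" using assms hinner_cnj[of w u] by simp
  thus ?thesis by (auto simp: herm_orth_def hinner_scale)
qed

lemma herm_orth_elem: "herm_orth L M \<Longrightarrow> u \<in> L \<Longrightarrow> w \<in> M \<Longrightarrow> hinner u w = 0"
  by (simp add: herm_orth_def)

theorem mainTheorem5:
  fixes E :: "'e set" and V :: "'v set" and src tgt :: "'e \<Rightarrow> 'v"
    and tri :: "'v \<Rightarrow> 'e \<times> 'e \<times> 'e"
  assumes "web E V src tgt tri"
  shows "bij_betw (\<lambda>r. \<lambda>e\<in>E. eigenspace1 (r e))
           (trace_minus_one_reps E V tri) (orth_line_assignments E V tri)"
proof -
  have inE: "a \<in> E \<and> b \<in> E \<and> c \<in> E" if "v \<in> V" "tri v = (a, b, c)" for v a b c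
  proof -
    have w: "\<forall>v\<in>V. case tri v of (a, b, c) \<Rightarrow>
        a \<noteq> b \<and> b \<noteq> c \<and> a \<noteq> c \<and>
        {e\<in>E. src e = v \<or> tgt e = v} = {a, b, c} \<and>
        ((src a = v \<and> src b = v \<and> src c = v) \<or> (tgt a = v \<and> tgt b = v \<and> tgt c = v))"
      using assms unfolding web_def by (elim conjE) assumption
    have "{e\<in>E. src e = v \<or> tgt e = v} = {a, b, c}" using bspec[OF w that(1)] that(2) by simp
    thus ?thesis by blast
  qed
  let ?f = "\<lambda>r. \<lambda>e\<in>E. eigenspace1 (r e)"
  let ?X = "trace_minus_one_reps E V tri" and ?Y = "orth_line_assignments E V tri"
  have repU: "\<exists>u. hinner u u = 1 \<and> r e = refl3 u" if "r \<in> ?X" "e \<in> E" for r e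
  proof -
    have "r e \<in> SU3" "mtrace (r e) = -1" using that by (auto simp: trace_minus_one_reps_def)
    thus ?thesis using char_trm1 by metis
  qed
  have img: "?f r \<in> ?Y" if r: "r \<in> ?X" for r
  proof -
    define U where "U e = (SOME u. hinner u u = 1 \<and> r e = refl3 u)" for e
    have U: "hinner (U e) (U e) = 1 \<and> r e = refl3 (U e)" if "e \<in> E" for e
      unfolding U_def using someI_ex[OF repU[OF r that]] .
    have eig: "eigenspace1 (r e) = {c *s U e | c. True}" if "e \<in> E" for e
      using U[OF that] eig_refl3 by metis
    have "?f r \<in> E \<rightarrow>\<^sub>E Collect complex_line"
    proof (rule PiE_I)
      fix e assume e: "e \<in> E"
      have "complex_line {c *s U e | c. True}" using U[OF e] unit_line by blast
      thus "?f r e \<in> Collect complex_line" using e eig[OF e] by simp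
    qed simp
    moreover have "case tri v of (a, b, c) \<Rightarrow>
          herm_orth (?f r a) (?f r b) \<and> herm_orth (?f r b) (?f r c) \<and> herm_orth (?f r a) (?f r c)"
      if v: "v \<in> V" for v
    proof (cases "tri v")
      case (fields a b c)
      have E3: "a \<in> E" "b \<in> E" "c \<in> E" using inE[OF v fields] by auto
      have "r a ** r b ** r c = mat 1" using r v fields by (auto simp: trace_minus_one_reps_def)
      hence p: "refl3 (U a) ** refl3 (U b) ** refl3 (U c) = mat 1"
        using U[OF E3(1)] U[OF E3(2)] U[OF E3(3)] by simp
      note o = vertex_orth[OF conjunct1[OF U[OF E3(1)]] conjunct1[OF U[OF E3(2)]] conjunct1[OF U[OF E3(3)]] p]
      have "hinner (U c) (U a) = 0" using o(3) hinner_cnj[of "U a" "U c"] by simp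
      hence "herm_orth {d *s U a | d. True} {d *s U c | d. True}" by (rule herm_orth_lines)
      thus ?thesis using fields E3 eig[OF E3(1)] eig[OF E3(2)] eig[OF E3(3)]
          herm_orth_lines[OF o(1)] herm_orth_lines[OF o(2)] by simp
    qed
    ultimately show ?thesis by (simp add: orth_line_assignments_def)
  qed
  have inj: "inj_on ?f ?X"
  proof (rule inj_onI)
    fix r r' assume r: "r \<in> ?X" and r': "r' \<in> ?X" and eq: "?f r = ?f r'"
    show "r = r'"
    proof (rule ext)
      fix e show "r e = r' e"
      proof (cases "e \<in> E")
        case True
        obtain u where u: "hinner u u = 1" "r e = refl3 u" using repU[OF r True] by blast
        obtain u' where u': "hinner u' u' = 1" "r' e = refl3 u'" using repU[OF r' True] by blast
        have "?f r e = ?f r' e" using eq by simp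
        hence "eigenspace1 (r e) = eigenspace1 (r' e)" using True by simp
        hence "{c *s u | c. True} = {c *s u' | c. True}" using u u' by (simp add: eig_refl3)
        thus ?thesis using refl3_same_line[OF u(1) u'(1)] u u' by simp
      next
        case False
        thus ?thesis using r r' by (auto simp: trace_minus_one_reps_def PiE_def extensional_def)
      qed
    qed
  qed
  have surj: "L \<in> ?f ` ?X" if L: "L \<in> ?Y" for L
  proof -
    have lines: "complex_line (L e)" if "e \<in> E" for e
      using L that by (auto simp: orth_line_assignments_def)
    have exW: "\<exists>u. hinner u u = 1 \<and> L e = {c *s u | c. True}" if "e \<in> E" for e
      using line_unit[OF lines[OF that]] by metis
    define W where "W e = (SOME u. hinner u u = 1 \<and> L e = {c *s u | c. True})" for e
    have W: "hinner (W e) (W e) = 1 \<and> L e = {c *s W e | c. True}" if "e \<in> E" for e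
      unfolding W_def using someI_ex[OF exW[OF that]] .
    define r where "r = (\<lambda>e\<in>E. refl3 (W e))"
    have "r \<in> ?X"
    proof -
      have "r \<in> E \<rightarrow>\<^sub>E SU3" unfolding r_def
        by (rule restrict_PiE_iff[THEN iffD2]) (use W refl3_SU3 in blast)
      moreover have "\<forall>e\<in>E. mtrace (r e) = -1" unfolding r_def using W refl3_SU3 by simp
      moreover have "case tri v of (a, b, c) \<Rightarrow> r a ** r b ** r c = mat 1" if v: "v \<in> V" for v
      proof (cases "tri v")
        case (fields a b c)
        have E3: "a \<in> E" "b \<in> E" "c \<in> E" using inE[OF v fields] by auto
        have ho: "herm_orth (L a) (L b)" "herm_orth (L b) (L c)" "herm_orth (L a) (L c)"
          using L v fields by (auto simp: orth_line_assignments_def)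
        have mem: "W x \<in> L x" if "x \<in> E" for x using W[OF that] line_mem by simp
        have "hinner (W a) (W b) = 0" "hinner (W b) (W c) = 0" "hinner (W a) (W c) = 0"
          using herm_orth_elem[OF ho(1) mem mem] herm_orth_elem[OF ho(2) mem mem]
            herm_orth_elem[OF ho(3) mem mem] E3 by simp_all
        hence "refl3 (W a) ** refl3 (W b) ** refl3 (W c) = mat 1"
          using triple_orth conjunct1[OF W[OF E3(1)]] conjunct1[OF W[OF E3(2)]] conjunct1[OF W[OF E3(3)]] by blast
        thus ?thesis using fields E3 by (simp add: r_def)
      qed
      ultimately show ?thesis by (simp add: trace_minus_one_reps_def)
    qed
    moreover have "?f r = L"
    proof (rule ext)
      fix e show "?f r e = L e"
      proof (cases "e \<in> E")
        case True
        thus ?thesis using W[OF True] eig_refl3 by (simp add: r_def)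
      next
        case False
        thus ?thesis using L by (auto simp: orth_line_assignments_def PiE_def extensional_def)
      qed
    qed
    ultimately show ?thesis by (intro image_eqI[of L ?f r]) simp_all
  qed
  show ?thesis unfolding bij_betw_def using inj img surj by blast
qed

end
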